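(* Assume the standing hypotheses described in the context. If $x,y\in\mathbb X$, $\|x-x_0\|\le t$, $\|y-x\|\le s$ and $s+t<R$ (with $s,t\ge 0$), then \[\|F'(x_0)^{-1}E_F(y,x)\|\le e_f(t+s,t),\] and, if $s\neq0$, \[\|F'(x_0)^{-1}E_F(y,x)\|\le\frac12\,\frac{f'(s+t)-f'(t)}{s}\,\|y-x\|^2.\]
   Context: Standing hypotheses: $\mathbb X,\mathbb Y$ are Banach spaces; $B(x,r)$ is the open ball. $R\in\mathbb R$, $C\subseteq\mathbb X$, $F:C\to\mathbb Y$ is continuous and continuously differentiable on $\mathrm{int}(C)$, $x_0\in\mathrm{int}(C)$ with $F'(x_0)$ non-singular, $f:[0,R)\to\mathbb R$ is continuously differentiable, $B(x_0,R)\subseteq C$, $\|F'(x_0)^{-1}[F'(y)-F'(x)]\|\le f'(\|y-x\|+\|x-x_0\|)-f'(\|x-x_0\|)$ for all $x,y\in B(x_0,R)$ with $\|x-x_0\|+\|y-x\|<R$, $\|F'(x_0)^{-1}F(x_0)\|\le f(0)$, and (h1) $f(0)>0$, $f'(0)=-1$; (h2) $f'$ is strictly increasing and convex; (h3) $f(t)<0$ for some $t\in(0,R)$. Linearization errors: $E_F(y,x):=F(y)-[F(x)+F'(x)(y-x)]$ for $x\in B(x_0,R)$, $y\in C$; $e_f(v,t):=f(v)-[f(t)+f'(t)(v-t)]$ for $t,v\in[0,R)$. *)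

theory Defs
  imports "HOL-Analysis.Analysis"
begin

definition E_F :: "('a::real_normed_vector \<Rightarrow> 'b::real_normed_vector) \<Rightarrow> ('a \<Rightarrow> ('a \<Rightarrow>\<^sub>L 'b)) \<Rightarrow> 'a \<Rightarrow> 'a \<Rightarrow> 'b" where
  "E_F F F' y x = F y - (F x + blinfun_apply (F' x) (y - x))"

definition e_f :: "(real \<Rightarrow> real) \<Rightarrow> (real \<Rightarrow> real) \<Rightarrow> real \<Rightarrow> real \<Rightarrow> real" where
  "e_f f f' v t = f v - (f t + f' t * (v - t))"

end

theory Submission
  imports Defs
begin


lemma slope_mono_cvx:
  fixes g :: "real \<Rightarrow> real"
  assumes g: "convex_on I g" and I: "p \<in> I" "q \<in> I" "p' \<in> I" "q' \<in> I"
    and le: "p < q" "p \<le> p'" "q \<le> q'" "p' < q'"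
  shows "(g q - g p) / (q - p) \<le> (g q' - g p') / (q' - p')"
proof -
  have A: "(g q - g p) / (q - p) \<le> (g q' - g p) / (q' - p)"
  proof (cases "q < q'")
    case True
    have "(g p - g q) / (p - q) \<le> (g p - g q') / (p - q')"
      using convex_on_slope_le(1)[OF g I(1) I(4) le(1) True] .
    then show ?thesis by (smt (verit) minus_divide_divide)
  next
    case False then show ?thesis using le by simp
  qed
  have B: "(g q' - g p) / (q' - p) \<le> (g q' - g p') / (q' - p')"
  proof (cases "p < p'")
    case True
    have "(g p - g q') / (p - q') \<le> (g p' - g q') / (p' - q')"
      using convex_on_slope_le(2)[OF g I(1) I(4) True le(4)] .
    then show ?thesis by (smt (verit) minus_divide_divide)
  next
    case False then show ?thesis using le by simp
  qed
  from A B show ?thesis by linarith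
qed

theorem corollary3p4:
  fixes F :: "'a::banach \<Rightarrow> 'b::banach"
    and F' :: "'a \<Rightarrow> ('a \<Rightarrow>\<^sub>L 'b)"
    and Finv :: "'b \<Rightarrow>\<^sub>L 'a"
    and C :: "'a set" and x0 :: 'a and R :: real
    and f f' :: "real \<Rightarrow> real"
    and x y :: 'a and s t :: real
  assumes F_cont: "continuous_on C F"
    and F_deriv: "\<And>z. z \<in> interior C \<Longrightarrow> (F has_derivative blinfun_apply (F' z)) (at z)"
    and F'_cont: "continuous_on (interior C) F'"
    and x0_int: "x0 \<in> interior C"
    and Finv_left: "Finv o\<^sub>L F' x0 = id_blinfun"
    and Finv_right: "F' x0 o\<^sub>L Finv = id_blinfun"
    and f_deriv: "\<And>u. u \<in> {0..<R} \<Longrightarrow> (f has_real_derivative f' u) (at u within {0..<R})"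
    and f'_cont: "continuous_on {0..<R} f'"
    and ball_C: "ball x0 R \<subseteq> C"
    and majorant: "\<And>u v. u \<in> ball x0 R \<Longrightarrow> v \<in> ball x0 R \<Longrightarrow> norm (u - x0) + norm (v - u) < R \<Longrightarrow>
        norm (Finv o\<^sub>L (F' v - F' u)) \<le> f' (norm (v - u) + norm (u - x0)) - f' (norm (u - x0))"
    and init: "norm (Finv (F x0)) \<le> f 0"
    and h1a: "f 0 > 0" and h1b: "f' 0 = -1"
    and h2a: "strict_mono_on {0..<R} f'" and h2b: "convex_on {0..<R} f'"
    and h3: "\<exists>u\<in>{0<..<R}. f u < 0"
    and t_nn: "0 \<le> t" and s_nn: "0 \<le> s"
    and hx: "norm (x - x0) \<le> t" and hy: "norm (y - x) \<le> s" and hst: "s + t < R"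
  shows "norm (Finv (E_F F F' y x)) \<le> e_f f f' (t + s) t
     \<and> (s \<noteq> 0 \<longrightarrow> norm (Finv (E_F F F' y x)) \<le> (1/2) * ((f' (s + t) - f' t) / s) * (norm (y - x))\<^sup>2)"
proof -
  define a where "a = norm (y - x)"
  define b where "b = norm (x - x0)"
  have a0: "0 \<le> a" and b0: "0 \<le> b" and at: "a \<le> s" and bt: "b \<le> t"
    using hx hy by (auto simp: a_def b_def)
  have tas: "\<tau> * a \<le> s \<and> 0 \<le> \<tau> * a \<and> \<tau> * s \<le> s \<and> 0 \<le> \<tau> * s \<and> \<tau> * a \<le> \<tau> * s"
    if "0 \<le> \<tau>" "\<tau> \<le> 1" for \<tau>
  proof -
    have "\<tau> * a \<le> a" using mult_left_le_one_le[OF a0 that] .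
    moreover have "\<tau> * s \<le> s" using mult_left_le_one_le[OF s_nn that] .
    moreover have "\<tau> * a \<le> \<tau> * s" using mult_left_mono[OF at that(1)] .
    ultimately show ?thesis using that a0 s_nn at by simp
  qed
  show ?thesis
  proof (cases "s = 0")
    case True
    then have "y = x" using hy by simp
    then show ?thesis using True by (simp add: E_F_def e_f_def)
  next
    case False
    then have s0: "0 < s" using s_nn by simp
    let ?K = "(f' (t + s) - f' t) / s"
    have f'mono: "\<And>u v. u \<in> {0..<R} \<Longrightarrow> v \<in> {0..<R} \<Longrightarrow> u \<le> v \<Longrightarrow> f' u \<le> f' v"
      using h2a by (meson strict_mono_on_leD)
    have ballint: "ball x0 R \<subseteq> interior C"
      using ball_C by (simp add: interior_maximal)
    define p where "p = (\<lambda>\<tau>::real. x + \<tau> *\<^sub>R (y - x))"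
    have pdist: "norm (p \<tau> - x) = \<tau> * a" if "0 \<le> \<tau>" for \<tau>
      using that by (simp add: p_def a_def)
    have pball: "p \<tau> \<in> ball x0 R" if "0 \<le> \<tau>" "\<tau> \<le> 1" for \<tau>
    proof -
      have "norm (p \<tau> - x0) \<le> norm (x - x0) + norm (p \<tau> - x)"
        using norm_triangle_sub[of "p \<tau> - x0" "x - x0"] by simp
      also have "\<dots> \<le> b + \<tau> * a" using pdist that b_def by simp
      also have "\<dots> \<le> t + s" using tas[OF that] bt by linarith
      finally show ?thesis using hst by (simp add: dist_norm norm_minus_commute)
    qed
    have xball: "x \<in> ball x0 R" using pball[of 0] by (simp add: p_def)
    define h where "h = (\<lambda>\<tau>. Finv (F (p \<tau>) - \<tau> *\<^sub>R F' x (y - x)))"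
    define h' where "h' = (\<lambda>\<tau>. Finv (F' (p \<tau>) (y - x) - F' x (y - x)))"
    have hder: "(h has_vector_derivative h' \<tau>) (at \<tau>)" if "0 \<le> \<tau>" "\<tau> \<le> 1" for \<tau>
    proof -
      have pd: "(p has_vector_derivative (y - x)) (at \<tau>)"
        unfolding p_def by (auto intro!: derivative_eq_intros)
      have Fd: "(F has_derivative blinfun_apply (F' (p \<tau>))) (at (p \<tau>))"
        using F_deriv pball[OF that] ballint by blast
      have "((F \<circ> p) has_vector_derivative F' (p \<tau>) (y - x)) (at \<tau>)"
        using vector_derivative_diff_chain_within[OF pd, of F "F' (p \<tau>)"] Fd
        by (simp add: has_derivative_at_withinI)
      then have "((\<lambda>\<tau>. F (p \<tau>) - \<tau> *\<^sub>R F' x (y - x)) has_vector_derivative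
          (F' (p \<tau>) (y - x) - 1 *\<^sub>R F' x (y - x))) (at \<tau>)"
        by (auto intro!: derivative_eq_intros simp: o_def)
      then show ?thesis unfolding h_def h'_def
        using bounded_linear.has_vector_derivative[OF blinfun.bounded_linear_right] by simp
    qed
    have h'bound: "norm (h' \<tau>) \<le> (f' (\<tau> * a + b) - f' b) * a" if "0 \<le> \<tau>" "\<tau> \<le> 1" for \<tau>
    proof -
      have "h' \<tau> = (Finv o\<^sub>L (F' (p \<tau>) - F' x)) (y - x)"
        by (simp add: h'_def blinfun.diff_left blinfun.diff_right)
      then have "norm (h' \<tau>) \<le> norm (Finv o\<^sub>L (F' (p \<tau>) - F' x)) * a"
        using norm_blinfun[of "Finv o\<^sub>L (F' (p \<tau>) - F' x)" "y - x"] by (simp add: a_def)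
      also have "\<dots> \<le> (f' (\<tau> * a + b) - f' b) * a"
      proof (rule mult_right_mono[OF _ a0])
        have "b + \<tau> * a \<le> t + s" using tas[OF that] bt by linarith
        then show "norm (Finv o\<^sub>L (F' (p \<tau>) - F' x)) \<le> f' (\<tau> * a + b) - f' b"
          using majorant[OF xball pball[OF that]] pdist[OF that(1)] hst
          by (simp add: b_def)
      qed
      finally show ?thesis .
    qed
    have hcont: "continuous_on {0..1} h"
      using hder by (intro continuous_at_imp_continuous_on ballI)
        (auto intro: has_vector_derivative_continuous)
    have hdiff: "h 1 - h 0 = Finv (E_F F F' y x)"
      by (simp add: h_def p_def E_F_def blinfun.diff_right blinfun.add_right algebra_simps)
    have fcont: "continuous_on {0..<R} f"
      using f_deriv by (rule DERIV_continuous_on)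
    have inR: "t + \<tau> * s \<in> {0..<R}" if "0 \<le> \<tau>" "\<tau> \<le> 1" for \<tau>
      using tas[OF that] t_nn hst by simp
    have B1: "norm (Finv (E_F F F' y x)) \<le> e_f f f' (t + s) t"
    proof -
      define \<phi> where "\<phi> = (\<lambda>\<tau>. f (t + \<tau> * s) - \<tau> * s * f' t)"
      have "norm (h 1 - h 0) \<le> \<phi> 1 - \<phi> 0"
      proof (rule differentiable_bound_general[where f'=h' and \<phi>'="\<lambda>\<tau>. s * f' (t + \<tau> * s) - s * f' t"])
        show "(0::real) < 1" by simp
        show "continuous_on {0..1} h" by (rule hcont)
        show "continuous_on {0..1} \<phi>"
          unfolding \<phi>_def
          by (intro continuous_intros continuous_on_compose2[OF fcont]) (use inR in auto)
        show "(h has_vector_derivative h' \<tau>) (at \<tau>)" if "0 < \<tau>" "\<tau> < 1" for \<tau>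
          using hder that by simp
        show "(\<phi> has_vector_derivative s * f' (t + \<tau> * s) - s * f' t) (at \<tau>)" if "0 < \<tau>" "\<tau> < 1" for \<tau>
        proof -
          have i: "t + \<tau> * s \<in> interior {0..<R}"
          proof -
            have "0 < t + \<tau> * s" using mult_pos_pos[OF that(1) s0] t_nn by linarith
            then show ?thesis using inR[of \<tau>] that by (simp add: interior_atLeastLessThan)
          qed
          have "(f has_real_derivative f' (t + \<tau> * s)) (at (t + \<tau> * s))"
            using f_deriv[of "t + \<tau> * s"] inR[of \<tau>] that at_within_interior[OF i] by simp
          then have fd: "((\<lambda>\<tau>. f (t + \<tau> * s)) has_real_derivative f' (t + \<tau> * s) * s) (at \<tau>)"
            by (rule DERIV_chain2[where f=f]) (auto intro!: derivative_eq_intros)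
          have "(\<phi> has_real_derivative f' (t + \<tau> * s) * s - s * f' t) (at \<tau>)"
            unfolding \<phi>_def by (auto intro!: derivative_eq_intros fd)
          then show ?thesis by (simp add: has_real_derivative_iff_has_vector_derivative algebra_simps)
        qed
        show "norm (h' \<tau>) \<le> s * f' (t + \<tau> * s) - s * f' t" if "0 < \<tau>" "\<tau> < 1" for \<tau>
        proof -
          have bR: "b \<in> {0..<R}" "t \<in> {0..<R}" using b0 bt hst s0 t_nn by auto
          have bR2: "b + \<tau> * a \<in> {0..<R}"
            using tas[of \<tau>] that b0 bt hst by simp
          have key: "f' (\<tau> * a + b) - f' b \<le> f' (t + \<tau> * s) - f' t"
          proof (cases "\<tau> * a = 0")
            case True
            then show ?thesis using f'mono[OF bR(2) inR[of \<tau>]] that s0 by (simp add: add_increasing2)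
          next
            case False
            then have w0: "0 < \<tau> * a" using that a0 by (simp add: zero_less_mult_iff order_le_neq_trans)
            have wv: "\<tau> * a \<le> \<tau> * s" using that at by (simp add: mult_left_mono)
            have sl: "(f' (b + \<tau> * a) - f' b) / (b + \<tau> * a - b) \<le> (f' (t + \<tau> * s) - f' t) / (t + \<tau> * s - t)"
              by (rule slope_mono_cvx[OF h2b bR(1) bR2 bR(2) inR[of \<tau>]]) (use w0 bt wv that mult_pos_pos[OF that(1) s0] in linarith)+
            have sl0: "0 \<le> (f' (t + \<tau> * s) - f' t)"
              using f'mono[OF bR(2) inR[of \<tau>]] that s0 by simp
            have "f' (b + \<tau> * a) - f' b \<le> (\<tau> * a) * ((f' (t + \<tau> * s) - f' t) / (\<tau> * s))"
              using sl w0 by (simp add: divide_le_eq mult.commute)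
            also have "\<dots> \<le> (\<tau> * s) * ((f' (t + \<tau> * s) - f' t) / (\<tau> * s))"
              by (rule mult_right_mono[OF wv]) (use sl0 that s0 in simp)
            also have "\<dots> = f' (t + \<tau> * s) - f' t" using that s0 by simp
            finally show ?thesis by (simp add: add.commute)
          qed
          have k0: "0 \<le> f' (\<tau> * a + b) - f' b"
            using f'mono[OF bR(1), of "\<tau> * a + b"] bR2 that a0 by (simp add: add.commute)
          have "norm (h' \<tau>) \<le> (f' (\<tau> * a + b) - f' b) * a" using h'bound that by simp
          also have "\<dots> \<le> (f' (t + \<tau> * s) - f' t) * s"
            by (rule mult_mono[OF key at _ a0]) (use key k0 in linarith)
          finally show ?thesis by (simp add: algebra_simps)
        qed
      qed
      then show ?thesis using hdiff by (simp add: \<phi>_def e_f_def algebra_simps)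
    qed
    have B2: "norm (Finv (E_F F F' y x)) \<le> (1/2) * ?K * (norm (y - x))\<^sup>2"
    proof -
      define \<phi> where "\<phi> = (\<lambda>\<tau>::real. ?K * a\<^sup>2 * \<tau>\<^sup>2 / 2)"
      have "norm (h 1 - h 0) \<le> \<phi> 1 - \<phi> 0"
      proof (rule differentiable_bound_general[where f'=h' and \<phi>'="\<lambda>\<tau>. ?K * a\<^sup>2 * \<tau>"])
        show "(0::real) < 1" by simp
        show "continuous_on {0..1} h" by (rule hcont)
        show "continuous_on {0..1} \<phi>" unfolding \<phi>_def by (intro continuous_intros) auto
        show "(h has_vector_derivative h' \<tau>) (at \<tau>)" if "0 < \<tau>" "\<tau> < 1" for \<tau>
          using hder that by simp
        show "(\<phi> has_vector_derivative ?K * a\<^sup>2 * \<tau>) (at \<tau>)" for \<tau>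
        proof -
          have "(\<phi> has_real_derivative ?K * a\<^sup>2 * \<tau>) (at \<tau>)"
            unfolding \<phi>_def using s0 by (auto intro!: derivative_eq_intros simp: power2_eq_square)
          then show ?thesis by (simp add: has_real_derivative_iff_has_vector_derivative)
        qed
        show "norm (h' \<tau>) \<le> ?K * a\<^sup>2 * \<tau>" if "0 < \<tau>" "\<tau> < 1" for \<tau>
        proof -
          have bR: "b \<in> {0..<R}" "t \<in> {0..<R}" "t + s \<in> {0..<R}" using b0 bt hst s0 t_nn by auto
          have bR2: "b + \<tau> * a \<in> {0..<R}"
            using tas[of \<tau>] that b0 bt hst by simp
          have key: "f' (\<tau> * a + b) - f' b \<le> \<tau> * a * ?K"
          proof (cases "\<tau> * a = 0")
            case True
            have e: "\<tau> * a + b = b" using True by simp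
            show ?thesis by (simp only: e True) simp
          next
            case False
            then have w0: "0 < \<tau> * a" using that a0 by (simp add: zero_less_mult_iff order_le_neq_trans)
            have ws: "\<tau> * a \<le> s" using tas[of \<tau>] that by simp
            have sl: "(f' (b + \<tau> * a) - f' b) / (b + \<tau> * a - b) \<le> (f' (t + s) - f' t) / (t + s - t)"
              by (rule slope_mono_cvx[OF h2b bR(1) bR2 bR(2) bR(3)]) (use w0 bt ws s0 that in linarith)+
            then show ?thesis using w0 by (simp add: divide_le_eq mult.commute add.commute)
          qed
          have "norm (h' \<tau>) \<le> (f' (\<tau> * a + b) - f' b) * a" using h'bound that by simp
          also have "\<dots> \<le> (\<tau> * a * ?K) * a" by (rule mult_right_mono[OF key a0])
          also have "\<dots> = ?K * a\<^sup>2 * \<tau>" by (simp add: power2_eq_square)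
          finally show ?thesis .
        qed
      qed
      then show ?thesis using hdiff by (simp add: \<phi>_def a_def)
    qed
    show ?thesis using B1 B2 by (simp add: add.commute)
  qed
qed

end
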